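(* Let $\mathcal{H}_A,\mathcal{H}_B$ be finite-dimensional Hilbert spaces with a fixed reference basis $\{|i\rangle_A\}$ of $\mathcal{H}_A$. For every state $\rho_{AB}$ on $\mathcal{H}_A\otimes\mathcal{H}_B$ with reduced state $\rho_A$, $$C^{A|B}_{l_1}(\rho_{AB})^2-C_{l_1}(\rho_A)^2\geq 2\left(\mathrm{Tr}\,\rho_{AB}^2-\mathrm{Tr}\,\rho_A^2\right).$$
   Context: $C_{l_1}(\rho_A)=\sum_{i\neq j}|\langle i|\rho_A|j\rangle|$. Writing $\rho_{AB}=\sum_{i,j}|i\rangle\langle j|_A\otimes\rho^B_{ij}$ with $\rho^B_{ij}=\langle i|\rho_{AB}|j\rangle_A$, $C^{A|B}_{l_1}(\rho_{AB})=\sum_{i\neq j}\|\rho^B_{ij}\|_{\mathrm{tr}}$, where $\|X\|_{\mathrm{tr}}=\mathrm{Tr}\sqrt{X^\dagger X}$. *)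

theory Defs
  imports "HOL-Analysis.Analysis"
begin

text \<open>Operators on a finite-dimensional Hilbert space with orthonormal reference
basis indexed by a finite type 'n are represented as complex 'n x 'n matrices.
A bipartite space H_A (x) H_B has basis indexed by 'a x 'b.\<close>

definition cnj_transpose :: "complex^'n^'m \<Rightarrow> complex^'m^'n" where
  "cnj_transpose A = (\<chi> i j. cnj (A $ j $ i))"

definition psd :: "complex^'n^'n \<Rightarrow> bool" where
  "psd A \<longleftrightarrow> cnj_transpose A = A \<and>
     (\<forall>x::complex^'n. 0 \<le> Re (\<Sum>i\<in>UNIV. \<Sum>j\<in>UNIV. cnj (x $ i) * A $ i $ j * x $ j))"

definition mat_sqrt :: "complex^'n^'n \<Rightarrow> complex^'n^'n" where
  "mat_sqrt M = (THE Y. psd Y \<and> Y ** Y = M)"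

definition trace_norm :: "complex^'n^'m \<Rightarrow> real" where
  "trace_norm X = Re (trace (mat_sqrt (cnj_transpose X ** X)))"

definition density_op :: "complex^'n^'n \<Rightarrow> bool" where
  "density_op \<rho> \<longleftrightarrow> psd \<rho> \<and> trace \<rho> = 1"

definition ptrace_B :: "complex^('a::finite \<times> 'b::finite)^('a \<times> 'b) \<Rightarrow> complex^'a^'a" where
  "ptrace_B \<rho> = (\<chi> i j. \<Sum>k\<in>UNIV. \<rho> $ (i, k) $ (j, k))"

definition block_B :: "complex^('a::finite \<times> 'b::finite)^('a \<times> 'b) \<Rightarrow> 'a \<Rightarrow> 'a \<Rightarrow> complex^'b^'b" where
  "block_B \<rho> i j = (\<chi> k l. \<rho> $ (i, k) $ (j, l))"

definition l1_coherence :: "complex^'a^'a \<Rightarrow> real" where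
  "l1_coherence \<rho> = (\<Sum>i\<in>UNIV. \<Sum>j\<in>UNIV - {i}. cmod (\<rho> $ i $ j))"

definition l1_coherence_AB :: "complex^('a::finite \<times> 'b::finite)^('a \<times> 'b) \<Rightarrow> real" where
  "l1_coherence_AB \<rho> = (\<Sum>i\<in>UNIV. \<Sum>j\<in>UNIV - {i}. trace_norm (block_B \<rho> i j))"

end

theory Submission
  imports Defs
begin

definition cinner :: "complex^'n \<Rightarrow> complex^'n \<Rightarrow> complex" where
  "cinner x y = (\<Sum>i\<in>UNIV. cnj (x $ i) * y $ i)"

definition hermitian :: "complex^'n^'n \<Rightarrow> bool" where
  "hermitian A \<longleftrightarrow> cnj_transpose A = A"

lemma hermitian_entry: "hermitian A \<Longrightarrow> cnj (A $ i $ j) = A $ j $ i"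
  unfolding hermitian_def cnj_transpose_def by (metis vec_lambda_beta)

lemma cinner_add_right: "cinner x (y + z) = cinner x y + cinner x z"
  unfolding cinner_def by (simp add: distrib_left sum.distrib)
lemma cinner_add_left: "cinner (x + y) z = cinner x z + cinner y z"
  unfolding cinner_def by (simp add: distrib_right sum.distrib)
lemma cinner_diff_right: "cinner x (y - z) = cinner x y - cinner x z"
  unfolding cinner_def by (simp add: right_diff_distrib sum_subtractf)
lemma cinner_diff_left: "cinner (x - y) z = cinner x z - cinner y z"
  unfolding cinner_def by (simp add: left_diff_distrib sum_subtractf)
lemma cinner_scale_right: "cinner x (c *s y) = c * cinner x y"
  unfolding cinner_def by (simp add: sum_distrib_left algebra_simps)
lemma cinner_scale_left: "cinner (c *s x) y = cnj c * cinner x y"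
  unfolding cinner_def by (simp add: sum_distrib_left algebra_simps)
lemma scaleR_vec_s: "r *\<^sub>R (y::complex^'n) = (of_real r) *s y"
  unfolding vec_eq_iff by (simp add: scaleR_conv_of_real[where 'a=complex])
lemma cinner_scaleR_right: "cinner x (r *\<^sub>R y) = of_real r * cinner x y"
  by (simp add: scaleR_vec_s cinner_scale_right)
lemma cinner_scaleR_left: "cinner (r *\<^sub>R x) y = of_real r * cinner x y"
  by (simp add: scaleR_vec_s cinner_scale_left)
lemma cinner_cnj: "cnj (cinner x y) = cinner y x"
  unfolding cinner_def by (simp add: mult.commute)
lemma cinner_zero_right[simp]: "cinner x 0 = 0" unfolding cinner_def by simp
lemma cinner_zero_left[simp]: "cinner 0 x = 0" unfolding cinner_def by simp

lemma cinner_self: "cinner x x = of_real ((norm x)\<^sup>2)"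
proof -
  have "cinner x x = (\<Sum>i\<in>UNIV. of_real ((cmod (x $ i))\<^sup>2))"
    unfolding cinner_def by (intro sum.cong refl) (metis complex_norm_square mult.commute)
  also have "\<dots> = of_real ((norm x)\<^sup>2)"
    unfolding norm_vec_def L2_set_def by (simp add: sum_nonneg)
  finally show ?thesis .
qed

lemma cinner_self_eq0: "cinner x x = 0 \<longleftrightarrow> x = 0"
  by (simp add: cinner_self)

lemma cinner_cauchy: "cmod (cinner x y) \<le> norm x * norm y"
proof -
  have "cmod (cinner x y) \<le> (\<Sum>i\<in>UNIV. cmod (cnj (x $ i) * y $ i))"
    unfolding cinner_def by (rule norm_sum)
  also have "\<dots> = (\<Sum>i\<in>UNIV. \<bar>cmod (x $ i)\<bar> * \<bar>cmod (y $ i)\<bar>)"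
    by (simp add: norm_mult)
  also have "\<dots> \<le> norm x * norm y"
    unfolding norm_vec_def by (rule L2_set_mult_ineq)
  finally show ?thesis .
qed

lemma cinner_mat: "cinner x (A *v y) = cinner (cnj_transpose A *v x) y"
proof -
  have "cinner x (A *v y) = (\<Sum>i\<in>UNIV. \<Sum>j\<in>UNIV. cnj (x $ i) * A $ i $ j * y $ j)"
    unfolding cinner_def matrix_vector_mult_def by (simp add: sum_distrib_left mult.assoc)
  also have "\<dots> = (\<Sum>j\<in>UNIV. \<Sum>i\<in>UNIV. cnj (x $ i) * A $ i $ j * y $ j)"
    by (rule sum.swap)
  also have "\<dots> = cinner (cnj_transpose A *v x) y"
    unfolding cinner_def matrix_vector_mult_def cnj_transpose_def
    by (simp add: cnj_sum sum_distrib_right sum_distrib_left mult_ac)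
  finally show ?thesis .
qed

lemma cinner_herm: "hermitian A \<Longrightarrow> cinner x (A *v y) = cinner (A *v x) y"
  by (simp add: cinner_mat hermitian_def)

lemma herm_form_real: "hermitian A \<Longrightarrow> cinner x (A *v x) = of_real (Re (cinner x (A *v x)))"
proof -
  assume h: "hermitian A"
  have "cnj (cinner x (A *v x)) = cinner x (A *v x)"
    by (metis cinner_cnj cinner_herm h)
  hence "Im (cinner x (A *v x)) = 0" by (metis cnj.sel(2) neg_equal_zero)
  thus ?thesis by (simp add: complex_eq_iff)
qed

lemma quad_form: "(\<Sum>i\<in>UNIV. \<Sum>j\<in>UNIV. cnj (x $ i) * A $ i $ j * x $ j) = cinner x (A *v x)"
  unfolding cinner_def matrix_vector_mult_def by (simp add: sum_distrib_left mult.assoc)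

lemma psd_iff: "psd A \<longleftrightarrow> hermitian A \<and> (\<forall>x. 0 \<le> Re (cinner x (A *v x)))"
  unfolding psd_def hermitian_def quad_form by simp

lemma pos_lemma:
  fixes a b :: real
  assumes "\<And>t. t > 0 \<Longrightarrow> t * a \<le> t^2 * b"
  shows "a \<le> 0"
proof (rule ccontr)
  assume "\<not> a \<le> 0" hence a: "a > 0" by simp
  define t where "t = a / (\<bar>b\<bar> + 1)"
  have t: "t > 0" using a by (simp add: t_def add_pos_nonneg)
  have "t * a \<le> t^2 * b" using assms t by simp
  hence "a \<le> t * b" using t by (simp add: power2_eq_square mult.assoc)
  also have "\<dots> \<le> t * \<bar>b\<bar>" using t by (simp add: mult_left_mono)
  also have "\<dots> < a"
  proof -
    have "t * \<bar>b\<bar> = a * (\<bar>b\<bar> / (\<bar>b\<bar> + 1))" unfolding t_def by simp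
    also have "\<dots> < a * 1" using a by (intro mult_strict_left_mono) auto
    finally show ?thesis by simp
  qed
  finally show False by simp
qed

lemma mat_vec_scale: "A *v (c *s x) = c *s (A *v (x::complex^'n))"
  unfolding matrix_vector_mult_def vec_eq_iff by (simp add: sum_distrib_left mult_ac)

lemma mat_vec_scaleR: "A *v (c *\<^sub>R x) = c *\<^sub>R (A *v (x::complex^'n))"
  by (simp add: scaleR_vec_s mat_vec_scale)

lemma cinner_sum_right: "cinner x (sum f S) = (\<Sum>i\<in>S. cinner x (f i))"
  unfolding cinner_def by (simp add: sum_distrib_left sum.swap[of _ S])

definition ON :: "('i \<Rightarrow> complex^'n) \<Rightarrow> 'i set \<Rightarrow> bool" where
  "ON v S \<longleftrightarrow> (\<forall>i\<in>S. \<forall>j\<in>S. cinner (v i) (v j) = (if i = j then 1 else 0))"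

definition EV :: "complex^'n^'n \<Rightarrow> ('i \<Rightarrow> complex^'n) \<Rightarrow> 'i set \<Rightarrow> bool" where
  "EV A v S \<longleftrightarrow> (\<forall>i\<in>S. A *v v i = cinner (v i) (A *v v i) *s v i)"

lemma norm1_cinner: "norm z = 1 \<Longrightarrow> cinner z z = 1"
  by (simp add: cinner_self)

lemma complement_exists:
  fixes v :: "'i \<Rightarrow> complex^'n"
  assumes fin: "finite S" and card: "card S < CARD('n)" and on: "ON v S"
  shows "\<exists>z. norm z = 1 \<and> (\<forall>i\<in>S. cinner (v i) z = 0)"
proof -
  have "vec.dim (vec.span (v ` S)) \<le> card (v ` S)"
    by (rule vec.dim_le_card) (auto simp: fin)
  also have "\<dots> \<le> card S" by (rule card_image_le[OF fin])
  also have "\<dots> < vec.dim (UNIV :: (complex^'n) set)" using card vec_dim_card by metis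
  finally have "vec.span (v ` S) \<noteq> UNIV" by (metis less_irrefl vec.dim_span)
  then obtain y where y: "y \<notin> vec.span (v ` S)" by auto
  define z0 where "z0 = y - (\<Sum>i\<in>S. cinner (v i) y *s v i)"
  have "(\<Sum>i\<in>S. cinner (v i) y *s v i) \<in> vec.span (v ` S)"
    by (intro vec.span_sum vec.span_scale vec.span_base) auto
  hence z0: "z0 \<noteq> 0" using y unfolding z0_def by auto
  have orth: "cinner (v k) z0 = 0" if k: "k \<in> S" for k
  proof -
    have "(\<Sum>i\<in>S. cinner (v k) (cinner (v i) y *s v i)) = (\<Sum>i\<in>S. if i = k then cinner (v k) y else 0)"
      using on k unfolding ON_def by (intro sum.cong refl) (auto simp: cinner_scale_right)
    also have "\<dots> = cinner (v k) y" using k fin by simp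
    finally show ?thesis unfolding z0_def by (simp add: cinner_diff_right cinner_sum_right)
  qed
  define z where "z = (1 / norm z0) *\<^sub>R z0"
  have "norm z = 1" using z0 unfolding z_def by simp
  moreover have "\<forall>i\<in>S. cinner (v i) z = 0" using orth unfolding z_def by (simp add: cinner_scaleR_right)
  ultimately show ?thesis by blast
qed

lemma cont_cinner: "continuous_on X (\<lambda>x. cinner a (f x))" if "continuous_on X f" for f :: "_ \<Rightarrow> complex^'n"
  unfolding cinner_def by (intro continuous_intros that)

lemma cont_form: "continuous_on X (\<lambda>x::complex^'n. Re (cinner x (A *v x)))"
  unfolding cinner_def matrix_vector_mult_def by (intro continuous_intros)

lemma form_scaleR: "Re (cinner (r *\<^sub>R y) (A *v (r *\<^sub>R y))) = r\<^sup>2 * Re (cinner y (A *v y))"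
  by (simp add: mat_vec_scaleR cinner_scaleR_left cinner_scaleR_right power2_eq_square)

lemma eigen_step:
  fixes v :: "'i \<Rightarrow> complex^'n"
  assumes herm: "hermitian A" and fin: "finite S" and card: "card S < CARD('n)"
    and on: "ON v S" and ev: "EV A v S"
  shows "\<exists>z. norm z = 1 \<and> (\<forall>i\<in>S. cinner (v i) z = 0) \<and> A *v z = cinner z (A *v z) *s z"
proof -
  define W where "W = {x. \<forall>i\<in>S. cinner (v i) x = 0}"
  define K where "K = W \<inter> sphere 0 1"
  define f where "f = (\<lambda>x::complex^'n. Re (cinner x (A *v x)))"
  have Wint: "W = (\<Inter>i\<in>S. {x. cinner (v i) x = 0})" unfolding W_def by auto
  have "closed W" unfolding Wint
    by (intro closed_INT ballI closed_Collect_eq cont_cinner continuous_intros)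
  hence "compact K" unfolding K_def by (intro closed_Int_compact compact_sphere)
  moreover have "K \<noteq> {}" using complement_exists[OF fin card on] unfolding K_def W_def by auto
  moreover have "continuous_on K f" unfolding f_def by (rule cont_form)
  ultimately obtain x0 where x0K: "x0 \<in> K" and max: "\<And>y. y \<in> K \<Longrightarrow> f y \<le> f x0"
    using continuous_attains_sup by metis
  define L where "L = f x0"
  have x0W: "x0 \<in> W" and nx0: "norm x0 = 1" using x0K unfolding K_def by auto
  have W_add: "x + y \<in> W" if "x \<in> W" "y \<in> W" for x y
    using that unfolding W_def by (simp add: cinner_add_right)
  have W_diff: "x - y \<in> W" if "x \<in> W" "y \<in> W" for x y
    using that unfolding W_def by (simp add: cinner_diff_right)
  have W_scale: "c *s x \<in> W" if "x \<in> W" for x c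
    using that unfolding W_def by (simp add: cinner_scale_right)
  have W_scaleR: "c *\<^sub>R x \<in> W" if "x \<in> W" for x c
    using that unfolding W_def by (simp add: cinner_scaleR_right)
  have W_A: "A *v x \<in> W" if "x \<in> W" for x
  proof -
    { fix i assume i: "i \<in> S"
      have "cinner (v i) (A *v x) = cinner (A *v v i) x" by (rule cinner_herm[OF herm])
      also have "\<dots> = cinner (cinner (v i) (A *v v i) *s v i) x"
        using ev i unfolding EV_def by metis
      also have "\<dots> = 0" using that i unfolding W_def by (simp add: cinner_scale_left)
      finally have "cinner (v i) (A *v x) = 0" . }
    thus ?thesis unfolding W_def by auto
  qed
  have bound: "f y \<le> L * (norm y)\<^sup>2" if y: "y \<in> W" for y
  proof (cases "y = 0")
    case True thus ?thesis unfolding f_def by simp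
  next
    case False
    define y' where "y' = (1 / norm y) *\<^sub>R y"
    have "y' \<in> K" unfolding K_def y'_def using y False by (auto intro: W_scaleR)
    hence "f y' \<le> L" using max unfolding L_def by auto
    moreover have "f y' = f y / (norm y)\<^sup>2" unfolding f_def y'_def form_scaleR
      by (simp add: power_divide)
    ultimately show ?thesis using False by (simp add: divide_le_eq mult.commute)
  qed
  define lm where "lm = cinner x0 (A *v x0)"
  have lam: "lm = of_real L" unfolding lm_def L_def f_def by (rule herm_form_real[OF herm])
  define w where "w = A *v x0 - lm *s x0"
  have wW: "w \<in> W" unfolding w_def by (intro W_diff W_A W_scale x0W)
  have c00: "cinner x0 x0 = 1" using nx0 by (rule norm1_cinner)
  have cx0w: "cinner x0 w = 0" unfolding w_def
    by (simp add: cinner_diff_right cinner_scale_right c00 lm_def)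
  have cwx0: "cinner w x0 = 0" using cx0w cinner_cnj by (metis complex_cnj_zero)
  have Ax0: "A *v x0 = w + lm *s x0" unfolding w_def by simp
  define N where "N = (norm w)\<^sup>2"
  define R where "R = Re (cinner w (A *v w))"
  have cww: "cinner w w = of_real N" unfolding N_def by (rule cinner_self)
  have c1: "cinner w (A *v x0) = of_real N" unfolding Ax0
    by (simp add: cinner_add_right cinner_scale_right cww cwx0)
  have c2: "cinner x0 (A *v w) = of_real N"
    unfolding cinner_herm[OF herm] Ax0 by (simp add: cinner_add_left cinner_scale_left cww cx0w)
  have "N \<le> 0"
  proof -
    have "(2 * N) \<le> 0"
    proof (rule pos_lemma[where b = "L * N - R"])
      fix t :: real assume t: "t > 0"
      define y where "y = x0 + t *\<^sub>R w"
      have "y \<in> W" unfolding y_def by (intro W_add W_scaleR x0W wW)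
      hence b: "f y \<le> L * (norm y)\<^sup>2" by (rule bound)
      have "cinner y y = 1 + of_real (t^2 * N)" unfolding y_def
        by (simp add: cinner_add_left cinner_add_right cinner_scaleR_left cinner_scaleR_right
            c00 cx0w cwx0 cww power2_eq_square)
      hence ny: "(norm y)\<^sup>2 = 1 + t^2 * N" unfolding cinner_self
        by (metis of_real_1 of_real_add of_real_eq_iff)
      have "cinner y (A *v y) = lm + of_real (2 * t * N) + of_real (t^2) * cinner w (A *v w)"
        unfolding y_def
        by (simp add: mat_vec_scaleR matrix_vector_right_distrib cinner_add_left cinner_add_right
            cinner_scaleR_left cinner_scaleR_right c1 c2 lm_def power2_eq_square algebra_simps)
      hence "f y = L + 2 * t * N + t^2 * R" unfolding f_def R_def lam by simp
      with b ny have "L + 2 * t * N + t^2 * R \<le> L * (1 + t^2 * N)" by simp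
      thus "t * (2 * N) \<le> t^2 * (L * N - R)" by (simp add: algebra_simps)
    qed
    thus ?thesis by simp
  qed
  hence "w = 0" unfolding N_def by simp
  hence "A *v x0 = lm *s x0" unfolding w_def by simp
  thus ?thesis using nx0 x0W unfolding W_def lm_def by auto
qed

lemma eigenbasis_gen:
  fixes A :: "complex^'n^'n"
  fixes S :: "'n set"
  assumes herm: "hermitian A"
  shows "\<exists>v. ON v S \<and> EV A v S"
proof -
  have "finite S" by simp
  thus ?thesis
  proof (induction S rule: finite_induct)
    case empty thus ?case unfolding ON_def EV_def by auto
  next
    case (insert x S)
    then obtain v where on: "ON v S" and ev: "EV A v S" by blast
    have "card S < card (insert x S)" using insert by simp
    also have "\<dots> \<le> CARD('n)" by (rule card_mono) auto
    finally have card: "card S < CARD('n)" .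
    obtain z where z1: "norm z = 1" and zo: "\<forall>i\<in>S. cinner (v i) z = 0"
      and ze: "A *v z = cinner z (A *v z) *s z"
      using eigen_step[OF herm insert(1) card on ev] by blast
    define v' where "v' = v(x := z)"
    have "ON v' (insert x S)"
      unfolding ON_def v'_def
    proof (intro ballI)
      fix i j assume i: "i \<in> insert x S" and j: "j \<in> insert x S"
      show "cinner ((v(x := z)) i) ((v(x := z)) j) = (if i = j then 1 else 0)"
      proof (cases "i = x"; cases "j = x")
        assume "i = x" "j = x" thus ?thesis using norm1_cinner[OF z1] by simp
      next
        assume a: "i = x" "j \<noteq> x"
        hence "j \<in> S" using j by auto
        hence "cinner z (v j) = 0" using zo by (metis cinner_cnj complex_cnj_zero)
        thus ?thesis using a by simp
      next
        assume a: "i \<noteq> x" "j = x"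
        hence "i \<in> S" using i by auto
        thus ?thesis using a zo by simp
      next
        assume a: "i \<noteq> x" "j \<noteq> x"
        hence "i \<in> S" "j \<in> S" using i j by auto
        thus ?thesis using a on unfolding ON_def by simp
      qed
    qed
    moreover have "EV A v' (insert x S)"
      using ev ze insert(2) unfolding EV_def v'_def by auto
    ultimately show ?case by blast
  qed
qed

definition Umat :: "('n \<Rightarrow> complex^'n) \<Rightarrow> complex^'n^'n" where
  "Umat v = (\<chi> r c. v c $ r)"

definition diagm :: "('n \<Rightarrow> complex) \<Rightarrow> complex^'n^'n" where
  "diagm e = (\<chi> i j. if i = j then e i else 0)"

lemma ct_ct[simp]: "cnj_transpose (cnj_transpose A) = A"
  unfolding cnj_transpose_def by (simp add: vec_eq_iff)

lemma ct_mult: "cnj_transpose (A ** B) = cnj_transpose B ** cnj_transpose A"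
proof -
  have "(cnj_transpose (A ** B)) $ i $ j = (cnj_transpose B ** cnj_transpose A) $ i $ j" for i j
  proof -
    have "(cnj_transpose (A ** B)) $ i $ j = cnj (\<Sum>k\<in>UNIV. A $ j $ k * B $ k $ i)"
      unfolding cnj_transpose_def matrix_matrix_mult_def by simp
    also have "\<dots> = (\<Sum>k\<in>UNIV. cnj (B $ k $ i) * cnj (A $ j $ k))"
      unfolding cnj_sum by (simp add: mult.commute)
    also have "\<dots> = (cnj_transpose B ** cnj_transpose A) $ i $ j"
      unfolding cnj_transpose_def matrix_matrix_mult_def by simp
    finally show ?thesis .
  qed
  thus ?thesis by (simp add: vec_eq_iff)
qed

lemma ct_diagm: "cnj_transpose (diagm e) = diagm (\<lambda>i. cnj (e i))"
  unfolding cnj_transpose_def diagm_def by (simp add: vec_eq_iff)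

lemma ct_diff: "cnj_transpose (A - B) = cnj_transpose A - cnj_transpose B"
  unfolding cnj_transpose_def by (simp add: vec_eq_iff)

lemma diagm_mult: "diagm a ** diagm b = diagm (\<lambda>i. a i * b i)"
proof -
  have "(diagm a ** diagm b) $ i $ j = diagm (\<lambda>i. a i * b i) $ i $ j" for i j
  proof -
    have "(diagm a ** diagm b) $ i $ j = (\<Sum>k\<in>UNIV. (if i = k then a i else 0) * (if k = j then b k else 0))"
      unfolding diagm_def matrix_matrix_mult_def by simp
    also have "\<dots> = (\<Sum>k\<in>UNIV. if k = i then (if i = j then a i * b i else 0) else 0)"
      by (intro sum.cong refl) auto
    also have "\<dots> = diagm (\<lambda>i. a i * b i) $ i $ j"
      unfolding diagm_def by simp
    finally show ?thesis .
  qed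
  thus ?thesis by (simp add: vec_eq_iff)
qed

lemma quad_form_gen: "(\<Sum>s\<in>UNIV. \<Sum>r\<in>UNIV. cnj (x $ s) * B $ s $ r * y $ r) = cinner x (B *v y)"
  unfolding cinner_def matrix_vector_mult_def by (simp add: sum_distrib_left mult.assoc)

lemma UsU: "ON (v :: 'n \<Rightarrow> complex^'n) UNIV \<Longrightarrow> cnj_transpose (Umat v) ** Umat v = mat 1"
proof -
  assume on: "ON v UNIV"
  have "(cnj_transpose (Umat v) ** Umat v) $ i $ j = mat 1 $ i $ j" for i j
  proof -
    have "(cnj_transpose (Umat v) ** Umat v) $ i $ j = cinner (v i) (v j)"
      unfolding matrix_matrix_mult_def cnj_transpose_def Umat_def cinner_def by simp
    also have "\<dots> = mat 1 $ i $ j" using on unfolding ON_def mat_def by simp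
    finally show ?thesis .
  qed
  thus ?thesis by (simp add: vec_eq_iff)
qed

lemma UUs: "ON (v :: 'n \<Rightarrow> complex^'n) UNIV \<Longrightarrow> Umat v ** cnj_transpose (Umat v) = mat 1"
  by (rule matrix_left_right_inverse[THEN iffD2, OF UsU])

lemma AU: "EV A (v :: 'n \<Rightarrow> complex^'n) UNIV \<Longrightarrow> A ** Umat v = Umat v ** diagm (\<lambda>k. cinner (v k) (A *v v k))"
  unfolding EV_def
proof -
  assume ev: "\<forall>i\<in>UNIV. A *v v i = cinner (v i) (A *v v i) *s v i"
  have "(A ** Umat v) $ r $ c = (A *v v c) $ r" for r c
    unfolding matrix_matrix_mult_def matrix_vector_mult_def Umat_def by simp
  moreover have "(Umat v ** diagm e) $ r $ c = e c * v c $ r" for r c e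
  proof -
    have "(Umat v ** diagm e) $ r $ c = (\<Sum>k\<in>UNIV. v k $ r * (if k = c then e k else 0))"
      unfolding matrix_matrix_mult_def diagm_def Umat_def by simp
    also have "\<dots> = (\<Sum>k\<in>UNIV. if k = c then e c * v c $ r else 0)"
      by (intro sum.cong refl) auto
    finally show ?thesis by simp
  qed
  moreover have "(A *v v c) $ r = cinner (v c) (A *v v c) * v c $ r" for r c
    using ev by (metis UNIV_I vector_smult_component)
  ultimately show ?thesis by (simp add: vec_eq_iff)
qed

lemma spectral:
  fixes A :: "complex^'n^'n"
  assumes "hermitian A"
  shows "\<exists>v. ON v UNIV \<and> EV A v UNIV \<and>
     A = Umat v ** diagm (\<lambda>k. cinner (v k) (A *v v k)) ** cnj_transpose (Umat v)"
proof -
  obtain v :: "'n \<Rightarrow> complex^'n" where on: "ON v UNIV" and ev: "EV A v UNIV" using eigenbasis_gen[OF assms] by blast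
  have "A = A ** (Umat v ** cnj_transpose (Umat v))" by (simp add: UUs[OF on])
  also have "\<dots> = Umat v ** diagm (\<lambda>k. cinner (v k) (A *v v k)) ** cnj_transpose (Umat v)"
    by (simp add: matrix_mul_assoc AU[OF ev])
  finally show ?thesis using on ev by blast
qed

lemma UsBU: "(cnj_transpose (Umat v) ** B ** Umat v) $ k $ l = cinner (v k) (B *v v l)"
proof -
  have "(cnj_transpose (Umat v) ** B ** Umat v) $ k $ l
        = (\<Sum>r\<in>UNIV. (\<Sum>s\<in>UNIV. cnj (v k $ s) * B $ s $ r) * v l $ r)"
    unfolding matrix_matrix_mult_def cnj_transpose_def Umat_def by simp
  also have "\<dots> = (\<Sum>r\<in>UNIV. \<Sum>s\<in>UNIV. cnj (v k $ s) * B $ s $ r * v l $ r)"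
    by (simp add: sum_distrib_right)
  also have "\<dots> = (\<Sum>s\<in>UNIV. \<Sum>r\<in>UNIV. cnj (v k $ s) * B $ s $ r * v l $ r)"
    by (rule sum.swap)
  also have "\<dots> = cinner (v k) (B *v v l)"
    by (rule quad_form_gen)
  finally show ?thesis .
qed

lemma herm_UDU:
  fixes v :: "'n \<Rightarrow> complex^'n"
  assumes "\<And>k. cnj (e k) = e k"
  shows "hermitian (Umat v ** diagm e ** cnj_transpose (Umat v))"
proof -
  have "diagm (\<lambda>i. cnj (e i)) = diagm e" using assms by simp
  thus ?thesis unfolding hermitian_def
    by (simp add: ct_mult ct_diagm matrix_mul_assoc)
qed

lemma form_UDU:
  fixes v :: "'n \<Rightarrow> complex^'n"
  shows "cinner x ((Umat v ** diagm e ** cnj_transpose (Umat v)) *v x)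
       = (\<Sum>i\<in>UNIV. e i * of_real ((cmod ((cnj_transpose (Umat v) *v x) $ i))\<^sup>2))"
proof -
  define y where "y = cnj_transpose (Umat v) *v x"
  have "cinner x ((Umat v ** diagm e ** cnj_transpose (Umat v)) *v x)
      = cinner x (Umat v *v (diagm e *v y))"
    unfolding y_def by (simp add: matrix_vector_mul_assoc matrix_mul_assoc)
  also have "\<dots> = cinner y (diagm e *v y)" unfolding cinner_mat y_def ..
  also have "\<dots> = (\<Sum>i\<in>UNIV. cnj (y $ i) * (\<Sum>j\<in>UNIV. (if i = j then e i else 0) * y $ j))"
    unfolding cinner_def matrix_vector_mult_def diagm_def by simp
  also have "\<dots> = (\<Sum>i\<in>UNIV. e i * of_real ((cmod (y $ i))\<^sup>2))"
  proof (intro sum.cong refl)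
    fix i
    have "(\<Sum>j\<in>UNIV. (if i = j then e i else 0) * y $ j) = (\<Sum>j\<in>UNIV. if j = i then e i * y $ i else 0)"
      by (intro sum.cong refl) auto
    hence "(\<Sum>j\<in>UNIV. (if i = j then e i else 0) * y $ j) = e i * y $ i" by simp
    hence "cnj (y $ i) * (\<Sum>j\<in>UNIV. (if i = j then e i else 0) * y $ j) = e i * (cnj (y $ i) * y $ i)"
      by (simp add: mult_ac)
    also have "cnj (y $ i) * y $ i = of_real ((cmod (y $ i))\<^sup>2)"
      by (metis complex_norm_square mult.commute)
    finally show "cnj (y $ i) * (\<Sum>j\<in>UNIV. (if i = j then e i else 0) * y $ j) = e i * of_real ((cmod (y $ i))\<^sup>2)" .
  qed
  finally show ?thesis unfolding y_def .
qed

lemma psd_UDU: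
  fixes v :: "'n \<Rightarrow> complex^'n"
  assumes "\<And>k. e k = of_real (r k)" "\<And>k. r k \<ge> 0"
  shows "psd (Umat v ** diagm e ** cnj_transpose (Umat v))"
  unfolding psd_iff
proof
  show "hermitian (Umat v ** diagm e ** cnj_transpose (Umat v))"
    by (rule herm_UDU) (simp add: assms(1))
  show "\<forall>x. 0 \<le> Re (cinner x ((Umat v ** diagm e ** cnj_transpose (Umat v)) *v x))"
    unfolding form_UDU assms(1) by (auto intro!: sum_nonneg simp: assms(2))
qed

lemma sq_UDU:
  fixes v :: "'n \<Rightarrow> complex^'n"
  assumes on: "ON v UNIV"
  shows "(Umat v ** diagm a ** cnj_transpose (Umat v)) ** (Umat v ** diagm b ** cnj_transpose (Umat v))
       = Umat v ** diagm (\<lambda>i. a i * b i) ** cnj_transpose (Umat v)"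
proof -
  have "(Umat v ** diagm a ** cnj_transpose (Umat v)) ** (Umat v ** diagm b ** cnj_transpose (Umat v))
      = Umat v ** diagm a ** (cnj_transpose (Umat v) ** Umat v) ** diagm b ** cnj_transpose (Umat v)"
    by (simp add: matrix_mul_assoc)
  also have "\<dots> = Umat v ** (diagm a ** diagm b) ** cnj_transpose (Umat v)"
    by (simp add: UsU[OF on] matrix_mul_assoc)
  finally show ?thesis by (simp add: diagm_mult)
qed

lemma psd_kernel:
  assumes p: "psd Y" and q: "Re (cinner x (Y *v x)) = 0"
  shows "Y *v x = 0"
proof -
  have herm: "hermitian Y" and pos: "\<And>z. 0 \<le> Re (cinner z (Y *v z))" using p psd_iff by auto
  define u where "u = Y *v x"
  define N where "N = (norm u)\<^sup>2"
  define R where "R = Re (cinner u (Y *v u))"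
  have cuu: "cinner u u = of_real N" unfolding N_def by (rule cinner_self)
  have c1: "cinner x (Y *v u) = of_real N" unfolding cinner_herm[OF herm] u_def[symmetric] cuu ..
  have c2: "cinner u (Y *v x) = of_real N" unfolding u_def[symmetric] cuu ..
  have "2 * N \<le> 0"
  proof (rule pos_lemma[where b = R])
    fix t :: real assume t: "t > 0"
    have "0 \<le> Re (cinner (x - t *\<^sub>R u) (Y *v (x - t *\<^sub>R u)))" by (rule pos)
    also have "cinner (x - t *\<^sub>R u) (Y *v (x - t *\<^sub>R u))
        = cinner x (Y *v x) - of_real (2 * t * N) + of_real (t^2) * cinner u (Y *v u)"
      by (simp add: mat_vec_scaleR matrix_vector_mult_diff_distrib cinner_diff_left cinner_diff_right
            cinner_scaleR_left cinner_scaleR_right c1 c2 power2_eq_square algebra_simps)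
    finally show "t * (2 * N) \<le> t^2 * R" using q unfolding R_def by (simp add: algebra_simps)
  qed
  hence "N = 0" unfolding N_def by simp
  thus ?thesis unfolding N_def u_def by simp
qed

lemma psd_herm: "psd Y \<Longrightarrow> hermitian Y" by (simp add: psd_iff)
lemma psd_pos: "psd Y \<Longrightarrow> 0 \<le> Re (cinner x (Y *v x))" by (simp add: psd_iff)

lemma herm_diff: "hermitian A \<Longrightarrow> hermitian B \<Longrightarrow> hermitian (A - B)"
  unfolding hermitian_def by (simp add: ct_diff)

lemma mm_diff_l: "(A::complex^'n^'n) ** (B - C) = A ** B - A ** C"
  unfolding matrix_matrix_mult_def by (simp add: vec_eq_iff sum_subtractf right_diff_distrib)
lemma mm_diff_r: "((A::complex^'n^'n) - B) ** C = A ** C - B ** C"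
  unfolding matrix_matrix_mult_def by (simp add: vec_eq_iff sum_subtractf left_diff_distrib)

lemma sqrt_unique:
  fixes Y Z :: "complex^'n^'n"
  assumes pY: "psd Y" and pZ: "psd Z" and eq: "Y ** Y = Z ** Z"
  shows "Y = Z"
proof -
  define D where "D = Y - Z"
  have hD: "hermitian D" unfolding D_def by (intro herm_diff psd_herm pY pZ)
  obtain v :: "'n \<Rightarrow> complex^'n" where on: "ON v UNIV" and ev: "EV D v UNIV"
    and dec: "D = Umat v ** diagm (\<lambda>k. cinner (v k) (D *v v k)) ** cnj_transpose (Umat v)"
    using spectral[OF hD] by blast
  have YD: "Y ** D + D ** Z = 0"
    unfolding D_def using eq by (simp add: mm_diff_l mm_diff_r matrix_mul_assoc)
  have e0: "cinner (v k) (D *v v k) = 0" for k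
  proof (rule ccontr)
    define e where "e = cinner (v k) (D *v v k)"
    assume "cinner (v k) (D *v v k) \<noteq> 0"
    hence ne: "e \<noteq> 0" unfolding e_def .
    have Dv: "D *v v k = e *s v k" using ev unfolding EV_def e_def by auto
    have ereal: "cnj e = e" unfolding e_def by (metis herm_form_real[OF hD] complex_cnj_complex_of_real)
    have "(Y ** D + D ** Z) *v v k = 0" using YD by simp
    hence "cinner (v k) ((Y ** D + D ** Z) *v v k) = 0" by simp
    moreover have "cinner (v k) ((Y ** D + D ** Z) *v v k)
        = e * (cinner (v k) (Y *v v k) + cinner (v k) (Z *v v k))"
    proof -
      have "cinner (v k) ((Y ** D + D ** Z) *v v k)
          = cinner (v k) (Y *v (D *v v k)) + cinner (v k) (D *v (Z *v v k))"
        by (simp add: matrix_vector_mult_add_rdistrib cinner_add_right matrix_vector_mul_assoc)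
      also have "cinner (v k) (D *v (Z *v v k)) = cinner (D *v v k) (Z *v v k)"
        by (rule cinner_herm[OF hD])
      finally show ?thesis using ereal
        by (simp add: Dv mat_vec_scale cinner_scale_right cinner_scale_left algebra_simps)
    qed
    ultimately have s0: "cinner (v k) (Y *v v k) + cinner (v k) (Z *v v k) = 0" using ne by simp
    have rY: "0 \<le> Re (cinner (v k) (Y *v v k))" and rZ: "0 \<le> Re (cinner (v k) (Z *v v k))"
      using pY pZ by (auto intro: psd_pos)
    have "Re (cinner (v k) (Y *v v k)) + Re (cinner (v k) (Z *v v k)) = 0"
      using arg_cong[OF s0, of Re] by simp
    hence "Re (cinner (v k) (Y *v v k)) = 0" "Re (cinner (v k) (Z *v v k)) = 0" using rY rZ by auto
    hence "Y *v v k = 0" "Z *v v k = 0" using psd_kernel pY pZ by auto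
    hence "D *v v k = 0" unfolding D_def by (simp add: matrix_vector_mult_diff_rdistrib)
    hence "e = 0" unfolding e_def by simp
    thus False using ne by simp
  qed
  have "diagm (\<lambda>k. cinner (v k) (D *v v k)) = 0" unfolding diagm_def e0 by (simp add: vec_eq_iff)
  hence "D = 0" using dec by simp
  thus ?thesis unfolding D_def by simp
qed

lemma psd_eig_real:
  assumes "psd M"
  shows "cinner x (M *v x) = of_real (Re (cinner x (M *v x))) \<and> 0 \<le> Re (cinner x (M *v x))"
  using assms herm_form_real psd_iff by blast

lemma sqrt_exists:
  fixes M :: "complex^'n^'n"
  assumes pM: "psd M"
  shows "\<exists>Y. psd Y \<and> Y ** Y = M"
proof -
  obtain v :: "'n \<Rightarrow> complex^'n" where on: "ON v UNIV" and ev: "EV M v UNIV"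
    and dec: "M = Umat v ** diagm (\<lambda>k. cinner (v k) (M *v v k)) ** cnj_transpose (Umat v)"
    using spectral[OF psd_herm[OF pM]] by blast
  define r where "r k = Re (cinner (v k) (M *v v k))" for k
  have r0: "r k \<ge> 0" for k unfolding r_def using psd_eig_real[OF pM] by blast
  have dr: "cinner (v k) (M *v v k) = of_real (r k)" for k unfolding r_def using psd_eig_real[OF pM] by blast
  define Y where "Y = Umat v ** diagm (\<lambda>k. of_real (sqrt (r k))) ** cnj_transpose (Umat v)"
  have "psd Y" unfolding Y_def by (rule psd_UDU) (auto simp: r0)
  moreover have "Y ** Y = M"
  proof -
    have "Y ** Y = Umat v ** diagm (\<lambda>k. of_real (sqrt (r k)) * of_real (sqrt (r k))) ** cnj_transpose (Umat v)"
      unfolding Y_def by (rule sq_UDU[OF on])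
    also have "(\<lambda>k. of_real (sqrt (r k)) * of_real (sqrt (r k)) :: complex) = (\<lambda>k. cinner (v k) (M *v v k))"
      using r0 by (auto simp: dr simp flip: of_real_mult)
    finally show ?thesis using dec by simp
  qed
  ultimately show ?thesis by blast
qed

lemma mat_sqrt_eq:
  assumes "psd Y" "Y ** Y = M"
  shows "mat_sqrt M = Y"
  unfolding mat_sqrt_def
  by (rule the_equality) (use assms sqrt_unique in auto)

definition frob2 :: "complex^'n^'n \<Rightarrow> real" where
  "frob2 X = (\<Sum>k\<in>UNIV. \<Sum>l\<in>UNIV. (cmod (X $ k $ l))\<^sup>2)"

lemma sum_sq_le:
  fixes a :: "'i \<Rightarrow> real"
  assumes "finite S" "\<And>i. i \<in> S \<Longrightarrow> a i \<ge> 0"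
  shows "(\<Sum>i\<in>S. (a i)\<^sup>2) \<le> (\<Sum>i\<in>S. a i)\<^sup>2"
proof -
  have "(\<Sum>i\<in>S. a i)\<^sup>2 = (\<Sum>i\<in>S. \<Sum>j\<in>S. a i * a j)"
    by (simp add: power2_eq_square sum_product)
  also have "\<dots> \<ge> (\<Sum>i\<in>S. a i * a i)"
  proof (rule sum_mono)
    fix i assume i: "i \<in> S"
    show "a i * a i \<le> (\<Sum>j\<in>S. a i * a j)"
      using i assms by (intro member_le_sum[where f = "\<lambda>j. a i * a j"]) auto
  qed
  finally show ?thesis by (simp add: power2_eq_square)
qed

lemma trace_UDU:
  fixes v :: "'n \<Rightarrow> complex^'n"
  assumes on: "ON v UNIV"
  shows "trace (Umat v ** diagm e ** cnj_transpose (Umat v)) = (\<Sum>k\<in>UNIV. e k)"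
proof -
  have "trace (Umat v ** diagm e ** cnj_transpose (Umat v)) = trace (Umat v ** (diagm e ** cnj_transpose (Umat v)))"
    by (simp add: matrix_mul_assoc)
  also have "\<dots> = trace ((diagm e ** cnj_transpose (Umat v)) ** Umat v)" by (rule trace_mul_sym)
  also have "\<dots> = trace (diagm e)" by (simp add: UsU[OF on] flip: matrix_mul_assoc)
  also have "\<dots> = (\<Sum>k\<in>UNIV. e k)" unfolding trace_def diagm_def by simp
  finally show ?thesis .
qed

lemma trace_conj:
  fixes v :: "'n \<Rightarrow> complex^'n"
  assumes on: "ON v UNIV"
  shows "trace X = (\<Sum>k\<in>UNIV. cinner (v k) (X *v v k))"
proof -
  have "trace (cnj_transpose (Umat v) ** X ** Umat v) = trace (Umat v ** (cnj_transpose (Umat v) ** X))"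
    by (rule trace_mul_sym)
  also have "\<dots> = trace X" by (simp add: UUs[OF on] matrix_mul_assoc)
  finally show ?thesis unfolding trace_def[of "cnj_transpose (Umat v) ** X ** Umat v"] UsBU by simp
qed

lemma ON_norm: "ON v UNIV \<Longrightarrow> norm (v k) = 1"
proof -
  assume "ON v UNIV"
  hence "cinner (v k) (v k) = 1" unfolding ON_def by simp
  hence "(norm (v k))\<^sup>2 = 1" unfolding cinner_self by (metis of_real_1 of_real_eq_iff)
  hence "norm (v k) = 1 \<or> norm (v k) = -1" by (simp add: power2_eq_1_iff)
  thus ?thesis using norm_ge_zero[of "v k"] by linarith
qed

lemma trace_frob: "Re (trace (cnj_transpose X ** X)) = frob2 X"
proof -
  have "trace (cnj_transpose X ** X) = (\<Sum>l\<in>UNIV. \<Sum>k\<in>UNIV. cnj (X $ k $ l) * X $ k $ l)"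
    unfolding trace_def matrix_matrix_mult_def cnj_transpose_def by simp
  also have "\<dots> = (\<Sum>l\<in>UNIV. \<Sum>k\<in>UNIV. of_real ((cmod (X $ k $ l))\<^sup>2))"
    by (intro sum.cong refl) (metis complex_norm_square mult.commute)
  also have "\<dots> = of_real (frob2 X)" unfolding frob2_def of_real_sum by (rule sum.swap)
  finally show ?thesis by simp
qed

lemma tn_facts:
  fixes X :: "complex^'n^'n"
  shows "0 \<le> trace_norm X \<and> cmod (trace X) \<le> trace_norm X \<and> frob2 X \<le> (trace_norm X)\<^sup>2"
proof -
  define M where "M = cnj_transpose X ** X"
  have form: "cinner x (M *v x) = cinner (X *v x) (X *v x)" for x
    unfolding M_def by (simp flip: matrix_vector_mul_assoc add: cinner_mat)
  have hM: "hermitian M" unfolding M_def hermitian_def by (simp add: ct_mult)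
  have pM: "psd M" unfolding psd_iff using hM form by (simp add: cinner_self)
  obtain v :: "'n \<Rightarrow> complex^'n" where on: "ON v UNIV" and ev: "EV M v UNIV"
    and dec: "M = Umat v ** diagm (\<lambda>k. cinner (v k) (M *v v k)) ** cnj_transpose (Umat v)"
    using spectral[OF hM] by blast
  define n where "n k = norm (X *v v k)" for k
  have n0: "n k \<ge> 0" for k unfolding n_def by simp
  have dk: "cinner (v k) (M *v v k) = of_real (n k) * of_real (n k)" for k
    unfolding form n_def cinner_self by (simp add: power2_eq_square)
  define S where "S = Umat v ** diagm (\<lambda>k. of_real (n k)) ** cnj_transpose (Umat v)"
  have pS: "psd S" unfolding S_def by (rule psd_UDU) (auto simp: n0)
  have SS: "S ** S = M" unfolding S_def sq_UDU[OF on] using dec dk by simp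
  have tn: "trace_norm X = (\<Sum>k\<in>UNIV. n k)"
    unfolding trace_norm_def M_def[symmetric] mat_sqrt_eq[OF pS SS] S_def trace_UDU[OF on]
    by simp
  have "frob2 X = Re (trace M)" unfolding M_def trace_frob ..
  also have "\<dots> = (\<Sum>k\<in>UNIV. (n k)\<^sup>2)" 
    by (subst dec) (simp add: trace_UDU[OF on] dk power2_eq_square flip: of_real_mult)
  also have "\<dots> \<le> (trace_norm X)\<^sup>2" unfolding tn by (rule sum_sq_le) (auto simp: n0)
  finally have c: "frob2 X \<le> (trace_norm X)\<^sup>2" .
  have "cmod (trace X) = cmod (\<Sum>k\<in>UNIV. cinner (v k) (X *v v k))" by (simp add: trace_conj[OF on])
  also have "\<dots> \<le> (\<Sum>k\<in>UNIV. cmod (cinner (v k) (X *v v k)))" by (rule norm_sum)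
  also have "\<dots> \<le> (\<Sum>k\<in>UNIV. n k)"
  proof (intro sum_mono)
    fix k
    show "cmod (cinner (v k) (X *v v k)) \<le> n k"
      using cinner_cauchy[of "v k" "X *v v k"] ON_norm[OF on, of k] unfolding n_def by simp
  qed
  finally have b: "cmod (trace X) \<le> trace_norm X" unfolding tn .
  have "0 \<le> trace_norm X" unfolding tn by (intro sum_nonneg n0)
  with b c show ?thesis by blast
qed

lemma tn_psd:
  assumes p: "psd (X :: complex^'n^'n)"
  shows "trace_norm X = Re (trace X) \<and> trace X = of_real (Re (trace X))"
proof -
  have h: "cnj_transpose X = X" using p unfolding psd_def by simp
  have "mat_sqrt (cnj_transpose X ** X) = X" unfolding h by (rule mat_sqrt_eq[OF p refl])
  hence t: "trace_norm X = Re (trace X)" unfolding trace_norm_def by simp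
  have d: "X $ k $ k = of_real (Re (X $ k $ k))" for k
  proof -
    have "cnj (X $ k $ k) = X $ k $ k" using hermitian_entry[of X k k] h unfolding hermitian_def by simp
    hence "Im (X $ k $ k) = 0" by (metis cnj.sel(2) neg_equal_zero)
    thus ?thesis by (simp add: complex_eq_iff)
  qed
  have "trace X = (\<Sum>k\<in>UNIV. of_real (Re (X $ k $ k)))" unfolding trace_def
    by (intro sum.cong refl d)
  also have "\<dots> = of_real (Re (trace X))" unfolding trace_def Re_sum of_real_sum ..
  finally have "trace X = of_real (Re (trace X))" .
  with t show ?thesis by blast
qed

lemma sum_pair: "(\<Sum>p\<in>UNIV. g p) = (\<Sum>a\<in>UNIV. \<Sum>b\<in>UNIV. g (a, b))"
  for g :: "'a::finite \<times> 'b::finite \<Rightarrow> 'c::comm_monoid_add"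
  by (simp add: sum.cartesian_product)

lemma sum_delta_pair: "(\<Sum>p\<in>UNIV. (if fst p = i then g (snd p) else 0)) = (\<Sum>k\<in>UNIV. g k)"
  for i :: "'a::finite" and g :: "'b::finite \<Rightarrow> 'c::comm_monoid_add"
proof -
  have "(\<Sum>p\<in>UNIV. (if fst p = i then g (snd p) else 0))
      = (\<Sum>a\<in>UNIV. \<Sum>b\<in>UNIV. (if a = i then g b else 0))" by (simp only: sum_pair fst_conv snd_conv)
  also have "\<dots> = (\<Sum>a\<in>UNIV. if a = i then (\<Sum>b\<in>UNIV. g b) else 0)"
    by (intro sum.cong refl) auto
  also have "\<dots> = (\<Sum>k\<in>UNIV. g k)" by simp
  finally show ?thesis .
qed

lemma psd_block:
  fixes \<rho> :: "complex^('a::finite \<times> 'b::finite)^('a \<times> 'b)"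
  assumes p: "psd \<rho>"
  shows "psd (block_B \<rho> i i)"
proof -
  have h: "cnj (\<rho> $ p $ q) = \<rho> $ q $ p" for p q
    using p hermitian_entry psd_iff by blast
  have "cnj_transpose (block_B \<rho> i i) = block_B \<rho> i i"
    unfolding cnj_transpose_def block_B_def by (simp add: vec_eq_iff h)
  moreover have "0 \<le> Re (\<Sum>k\<in>UNIV. \<Sum>l\<in>UNIV. cnj (x $ k) * block_B \<rho> i i $ k $ l * x $ l)"
    for x :: "complex^'b"
  proof -
    define y :: "complex^('a \<times> 'b)" where "y = (\<chi> p. if fst p = i then x $ snd p else 0)"
    have "0 \<le> Re (\<Sum>p\<in>UNIV. \<Sum>q\<in>UNIV. cnj (y $ p) * \<rho> $ p $ q * y $ q)"
      using p unfolding psd_def by blast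
    also have "(\<Sum>p\<in>UNIV. \<Sum>q\<in>UNIV. cnj (y $ p) * \<rho> $ p $ q * y $ q)
        = (\<Sum>p\<in>UNIV. if fst p = i then (\<Sum>q\<in>UNIV. if fst q = i then
              cnj (x $ snd p) * \<rho> $ (i, snd p) $ (i, snd q) * x $ snd q else 0) else 0)"
      unfolding y_def by (intro sum.cong refl) (auto intro!: sum.cong)
    also have "\<dots> = (\<Sum>k\<in>UNIV. \<Sum>q\<in>UNIV. if fst q = i then
              cnj (x $ k) * \<rho> $ (i, k) $ (i, snd q) * x $ snd q else 0)"
      by (rule sum_delta_pair[where g = "\<lambda>k. \<Sum>q\<in>UNIV. if fst q = i then
              cnj (x $ k) * \<rho> $ (i, k) $ (i, snd q) * x $ snd q else 0"])
    also have "\<dots> = (\<Sum>k\<in>UNIV. \<Sum>l\<in>UNIV. cnj (x $ k) * \<rho> $ (i, k) $ (i, l) * x $ l)"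
      by (intro sum.cong refl sum_delta_pair[where g = "\<lambda>l. cnj (x $ k) * \<rho> $ (i, k) $ (i, l) * x $ l" for k])
    also have "\<dots> = (\<Sum>k\<in>UNIV. \<Sum>l\<in>UNIV. cnj (x $ k) * block_B \<rho> i i $ k $ l * x $ l)"
      unfolding block_B_def by simp
    finally show ?thesis .
  qed
  ultimately show ?thesis unfolding psd_def by blast
qed

lemma trace_sq_herm:
  fixes A :: "complex^'n^'n"
  assumes "\<And>p q. cnj (A $ p $ q) = A $ q $ p"
  shows "Re (trace (A ** A)) = (\<Sum>p\<in>UNIV. \<Sum>q\<in>UNIV. (cmod (A $ p $ q))\<^sup>2)"
proof -
  have "trace (A ** A) = (\<Sum>p\<in>UNIV. \<Sum>q\<in>UNIV. A $ p $ q * cnj (A $ p $ q))"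
    unfolding trace_def matrix_matrix_mult_def by (simp add: assms)
  also have "\<dots> = (\<Sum>p\<in>UNIV. \<Sum>q\<in>UNIV. of_real ((cmod (A $ p $ q))\<^sup>2))"
    by (intro sum.cong refl) (metis complex_norm_square)
  finally show ?thesis by (simp only: Re_sum Re_complex_of_real)
qed

lemma final_ineq:
  fixes t c f :: "'a::finite \<Rightarrow> 'a \<Rightarrow> real"
  assumes ct: "\<And>i j. c i j \<le> t i j" and c0: "\<And>i j. 0 \<le> c i j"
    and ft: "\<And>i j. f i j \<le> (t i j)\<^sup>2" and fd: "\<And>i. f i i \<le> (c i i)\<^sup>2"
    and fs: "\<And>i j. f j i = f i j" and cs: "\<And>i j. c j i = c i j"
  shows "2 * ((\<Sum>i\<in>UNIV. \<Sum>j\<in>UNIV. f i j) - (\<Sum>i\<in>UNIV. \<Sum>j\<in>UNIV. (c i j)\<^sup>2))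
     \<le> (\<Sum>i\<in>UNIV. \<Sum>j\<in>UNIV - {i}. t i j)\<^sup>2 - (\<Sum>i\<in>UNIV. \<Sum>j\<in>UNIV - {i}. c i j)\<^sup>2"
proof -
  define P where "P = {p :: 'a \<times> 'a. fst p \<noteq> snd p}"
  have SP: "Sigma UNIV (\<lambda>i. UNIV - {i}) = P" unfolding P_def by auto
  have red: "(\<Sum>i\<in>UNIV. \<Sum>j\<in>UNIV - {i}. g i j) = (\<Sum>p\<in>P. g (fst p) (snd p))" for g :: "'a \<Rightarrow> 'a \<Rightarrow> real"
    by (subst sum.Sigma) (auto simp: SP case_prod_beta)
  define G where "G p q = t (fst p) (snd p) * t (fst q) (snd q) - c (fst p) (snd p) * c (fst q) (snd q)" for p q
  have t0: "0 \<le> t i j" for i j using c0 ct order_trans by blast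
  have G0: "0 \<le> G p q" for p q
    unfolding G_def using mult_mono[OF ct ct t0 c0] by simp
  have sq: "(\<Sum>p\<in>P. t (fst p) (snd p))\<^sup>2 - (\<Sum>p\<in>P. c (fst p) (snd p))\<^sup>2 = (\<Sum>p\<in>P. \<Sum>q\<in>P. G p q)"
    unfolding G_def power2_eq_square sum_product by (simp add: sum_subtractf)
  have tt: "f i j \<le> t i j * t j i" for i j
  proof (cases "t i j \<le> t j i")
    case True
    have "f i j \<le> t i j * t i j" using ft[of i j] by (simp add: power2_eq_square)
    also have "\<dots> \<le> t i j * t j i" using True t0 by (simp add: mult_left_mono)
    finally show ?thesis .
  next
    case False
    have "f i j \<le> t j i * t j i" using ft[of j i] fs[of i j] by (simp add: power2_eq_square)
    also have "\<dots> \<le> t i j * t j i" using False t0 by (simp add: mult_right_mono)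
    finally show ?thesis .
  qed
  have inner: "2 * (f (fst p) (snd p) - (c (fst p) (snd p))\<^sup>2) \<le> (\<Sum>q\<in>P. G p q)" if p: "p \<in> P" for p
  proof -
    obtain i j where pij: "p = (i, j)" by (cases p)
    have ij: "i \<noteq> j" using p pij unfolding P_def by simp
    have sub: "{(i, j), (j, i)} \<subseteq> P" using ij unfolding P_def by auto
    have "(\<Sum>q\<in>{(i, j), (j, i)}. G p q) \<le> (\<Sum>q\<in>P. G p q)"
      by (rule sum_mono2) (use sub G0 in auto)
    moreover have "(\<Sum>q\<in>{(i, j), (j, i)}. G p q) = G p (i, j) + G p (j, i)" using ij by simp
    moreover have "G p (i, j) \<ge> f i j - (c i j)\<^sup>2"
      unfolding G_def pij using ft[of i j] by (simp add: power2_eq_square)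
    moreover have "G p (j, i) \<ge> f i j - (c i j)\<^sup>2"
      unfolding G_def pij using tt[of i j] cs[of i j] by (simp add: power2_eq_square)
    ultimately show ?thesis unfolding pij by simp
  qed
  define h where "h p = f (fst p) (snd p) - (c (fst p) (snd p))\<^sup>2" for p
  have "(\<Sum>i\<in>UNIV. \<Sum>j\<in>UNIV. f i j) - (\<Sum>i\<in>UNIV. \<Sum>j\<in>UNIV. (c i j)\<^sup>2) = (\<Sum>p\<in>UNIV. h p)"
    unfolding h_def sum_subtractf[symmetric] sum_pair[of "\<lambda>p. f (fst p) (snd p) - (c (fst p) (snd p))\<^sup>2"]
    by simp
  also have "\<dots> = (\<Sum>p\<in>P. h p) + (\<Sum>p\<in>UNIV - P. h p)"
    by (simp add: sum.subset_diff[of P UNIV])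
  also have "(\<Sum>p\<in>UNIV - P. h p) \<le> 0"
    by (rule sum_nonpos) (auto simp: P_def h_def fd)
  finally have "2 * ((\<Sum>i\<in>UNIV. \<Sum>j\<in>UNIV. f i j) - (\<Sum>i\<in>UNIV. \<Sum>j\<in>UNIV. (c i j)\<^sup>2)) \<le> (\<Sum>p\<in>P. 2 * h p)"
    by (simp add: sum_distrib_left[symmetric])
  also have "\<dots> \<le> (\<Sum>p\<in>P. \<Sum>q\<in>P. G p q)"
    by (rule sum_mono) (use inner in \<open>auto simp: h_def\<close>)
  finally show ?thesis unfolding red sq .
qed

theorem proposition6:
  fixes \<rho> :: "complex^('a::finite \<times> 'b::finite)^('a \<times> 'b)"
  assumes "density_op \<rho>"
  shows "(l1_coherence_AB \<rho>)\<^sup>2 - (l1_coherence (ptrace_B \<rho>))\<^sup>2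
         \<ge> 2 * (Re (trace (\<rho> ** \<rho>)) - Re (trace (ptrace_B \<rho> ** ptrace_B \<rho>)))"
proof -
  have p: "psd \<rho>" using assms unfolding density_op_def by simp
  have h: "cnj (\<rho> $ p $ q) = \<rho> $ q $ p" for p q
    using p hermitian_entry psd_iff by blast
  define t where "t i j = trace_norm (block_B \<rho> i j)" for i j
  define c where "c i j = cmod (ptrace_B \<rho> $ i $ j)" for i j
  define f where "f i j = frob2 (block_B \<rho> i j)" for i j
  have tr: "ptrace_B \<rho> $ i $ j = trace (block_B \<rho> i j)" for i j
    unfolding ptrace_B_def block_B_def trace_def by simp
  have ct: "c i j \<le> t i j" for i j unfolding c_def t_def tr using tn_facts by blast
  have c0: "0 \<le> c i j" for i j unfolding c_def by simp
  have ft: "f i j \<le> (t i j)\<^sup>2" for i j unfolding f_def t_def using tn_facts by blast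
  have fd: "f i i \<le> (c i i)\<^sup>2" for i
  proof -
    have pb: "psd (block_B \<rho> i i)" by (rule psd_block[OF p])
    from tn_psd[OF pb] have a: "t i i = Re (trace (block_B \<rho> i i))"
      and b: "trace (block_B \<rho> i i) = of_real (Re (trace (block_B \<rho> i i)))"
      unfolding t_def by auto
    have "0 \<le> t i i" unfolding t_def using tn_facts by blast
    hence "c i i = t i i" unfolding c_def tr using a b by (metis abs_of_nonneg norm_of_real)
    thus ?thesis using ft[of i i] by simp
  qed
  have hA: "cnj (ptrace_B \<rho> $ i $ j) = ptrace_B \<rho> $ j $ i" for i j
    unfolding ptrace_B_def by (simp add: cnj_sum h)
  have cs: "c j i = c i j" for i j unfolding c_def by (metis hA complex_mod_cnj)
  have fs: "f j i = f i j" for i j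
  proof -
    have "f j i = (\<Sum>k\<in>UNIV. \<Sum>l\<in>UNIV. (cmod (\<rho> $ (i, l) $ (j, k)))\<^sup>2)"
      unfolding f_def frob2_def block_B_def
      by (intro sum.cong refl, simp) (metis h complex_mod_cnj)
    also have "\<dots> = (\<Sum>l\<in>UNIV. \<Sum>k\<in>UNIV. (cmod (\<rho> $ (i, l) $ (j, k)))\<^sup>2)"
      by (rule sum.swap)
    also have "\<dots> = f i j" unfolding f_def frob2_def block_B_def by simp
    finally show ?thesis .
  qed
  have t1: "Re (trace (\<rho> ** \<rho>)) = (\<Sum>i\<in>UNIV. \<Sum>j\<in>UNIV. f i j)"
  proof -
    have "Re (trace (\<rho> ** \<rho>)) = (\<Sum>p\<in>UNIV. \<Sum>q\<in>UNIV. (cmod (\<rho> $ p $ q))\<^sup>2)"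
      by (rule trace_sq_herm) (rule h)
    also have "\<dots> = (\<Sum>i\<in>UNIV. \<Sum>k\<in>UNIV. \<Sum>j\<in>UNIV. \<Sum>l\<in>UNIV. (cmod (\<rho> $ (i, k) $ (j, l)))\<^sup>2)"
      by (simp only: sum_pair)
    also have "\<dots> = (\<Sum>i\<in>UNIV. \<Sum>j\<in>UNIV. \<Sum>k\<in>UNIV. \<Sum>l\<in>UNIV. (cmod (\<rho> $ (i, k) $ (j, l)))\<^sup>2)"
      by (intro sum.cong refl sum.swap)
    also have "\<dots> = (\<Sum>i\<in>UNIV. \<Sum>j\<in>UNIV. f i j)"
      unfolding f_def frob2_def block_B_def by simp
    finally show ?thesis .
  qed
  have t2: "Re (trace (ptrace_B \<rho> ** ptrace_B \<rho>)) = (\<Sum>i\<in>UNIV. \<Sum>j\<in>UNIV. (c i j)\<^sup>2)"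
    unfolding c_def by (rule trace_sq_herm) (rule hA)
  have l1: "l1_coherence_AB \<rho> = (\<Sum>i\<in>UNIV. \<Sum>j\<in>UNIV - {i}. t i j)"
    unfolding l1_coherence_AB_def t_def ..
  have l2: "l1_coherence (ptrace_B \<rho>) = (\<Sum>i\<in>UNIV. \<Sum>j\<in>UNIV - {i}. c i j)"
    unfolding l1_coherence_def c_def ..
  show ?thesis unfolding l1 l2 t1 t2
    using final_ineq[of c t f, OF ct c0 ft fd fs cs] by simp
qed

end
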